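(* In the setting described in the context, if type B blowup occurs, then either $0<v_0<1$ and $\omega_0<-\frac{\nu}{2}f_\infty(v_0)$, or $v_0>1$ and $\omega_0>-\frac{\nu}{2}f_\infty(v_0)$.
   Context: Fix $\nu>0$, $v_0>0$ with $v_0\neq1$, and $\omega_0\in\mathbb{R}$. Consider the real ODE system $\frac{d\omega_{-2,i}}{dt}=\omega_{-2,i}^2\frac{1-2v_c^2+5v_c^4}{4v_c^2(1-v_c^2)^2}-\nu\omega_{-2,i}$, $\frac{dv_c}{dt}=-\omega_{-2,i}\frac{1+v_c^2}{4v_c(1-v_c^2)}$ with $v_c(0)=v_0$, $\omega_{-2,i}(0)=\omega_0$; its solution (continued through $v_c=1$) is characterized as follows. Let $F(v)=\frac{v(v^2-1)}{(v^2+1)^2}+\arctan v$, which is a strictly increasing bijection from $(0,\infty)$ onto $(0,\pi/2)$, and let $G(t)=F(v_0)+\frac{2\omega_0 v_0(1-e^{-\nu t})}{\nu(v_0^2-1)(v_0^2+1)^2}$. Then $v_c(t)$ is defined by $F(v_c(t))=G(t)$ for as long as $G(t)\in(0,\pi/2)$, and $\omega_{-2,i}(t)=\omega_0e^{-\nu t}\frac{v_0}{v_c(t)}\frac{v_c(t)^2-1}{v_0^2-1}\left(\frac{v_c(t)^2+1}{v_0^2+1}\right)^2$. Type A blowup means: there is a finite $t_c>0$ with $v_c(t)>0$ on $[0,t_c)$ and $v_c(t)\to0^+$ as $t\to t_c^-$. Type B blowup means: there is a finite $t_c>0$ with $v_c(t)\in(0,\infty)$ on $[0,t_c)$ and $v_c(t)\to+\infty$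 as $t\to t_c^-$. Here $f_0(x)=(x^2-1)^2+\frac{(x^2+1)^2}{x}(x^2-1)\arctan(x)$ and $f_\infty(x)=(x^2-1)^2+\frac{(x^2+1)^2}{x}(x^2-1)\left(\arctan(x)-\frac{\pi}{2}\right)$ for $x>0$. *)

theory Defs
  imports "HOL-Analysis.Analysis"
begin

definition Fv :: "real \<Rightarrow> real" where
  "Fv v = v * (v^2 - 1) / (v^2 + 1)^2 + arctan v"

definition Gt :: "real \<Rightarrow> real \<Rightarrow> real \<Rightarrow> real \<Rightarrow> real" where
  "Gt \<nu> v0 w0 t = Fv v0 + 2 * w0 * v0 * (1 - exp (- \<nu> * t)) / (\<nu> * (v0^2 - 1) * (v0^2 + 1)^2)"

text \<open>The solution component v_c(t): the unique positive v with F v = G t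
  (meaningful as long as G t lies in (0, pi/2)).\<close>
definition vc :: "real \<Rightarrow> real \<Rightarrow> real \<Rightarrow> real \<Rightarrow> real" where
  "vc \<nu> v0 w0 t = (THE v. 0 < v \<and> Fv v = Gt \<nu> v0 w0 t)"

definition f_inf :: "real \<Rightarrow> real" where
  "f_inf x = (x^2 - 1)^2 + ((x^2 + 1)^2 / x) * (x^2 - 1) * (arctan x - pi / 2)"

definition typeB_blowup :: "real \<Rightarrow> real \<Rightarrow> real \<Rightarrow> bool" where
  "typeB_blowup \<nu> v0 w0 \<longleftrightarrow>
     (\<exists>tc > 0. (\<forall>t \<in> {0..<tc}. Gt \<nu> v0 w0 t \<in> {0<..<pi/2}) \<and>
               filterlim (vc \<nu> v0 w0) at_top (at_left tc))"

end

theory Submission imports Defs "HOL-Analysis.Analysis" begin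

lemma gen: fixes p q v a nu :: real assumes "v \<noteq> 0" "q \<noteq> 0"
  shows "- (nu / 2) * (p^2 + (q^2 / v) * p * (a - pi / 2)) = nu * p * q^2 * (pi/2 - (v * p / q^2 + a)) / (2 * v)"
  using assms by (simp add: field_simps) (simp add: algebra_simps power2_eq_square)
lemma fi: fixes v0 nu :: real assumes "v0 > 0"
  shows "- (nu / 2) * f_inf v0 = nu * (v0^2 - 1) * (v0^2 + 1)^2 * (pi/2 - Fv v0) / (2 * v0)"
proof -
  have "v0^2 + 1 \<noteq> 0" using zero_le_power2[of v0] by linarith
  thus ?thesis unfolding f_inf_def Fv_def using assms by (intro gen) auto
qed

lemma nz[simp]: "(x::real)^2 + 1 \<noteq> 0" "1 + (x::real)^2 \<noteq> 0"
  using zero_le_power2[of x] by linarith+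
lemma alg: fixes x :: real
  shows "inverse (1 + x^2) + ((x^2 - 1 + 2 * x * x) * (1 + x^2)^2 - x * (x^2 - 1) * (4 * (x * (1 + x^2)))) / (1 + x^2) ^ 4 =
     8 * x^2 / (1 + x^2) ^ 3"
proof -
  define q where "q = 1 + x^2"
  have q: "q \<noteq> 0" unfolding q_def by simp
  have h: "((x^2 - 1 + 2 * x * x) * q^2 - x * (x^2 - 1) * (4 * (x * q))) + q^3 = 8*x^2*q"
    unfolding q_def by (simp add: algebra_simps power2_eq_square power3_eq_cube)
  have "inverse q + ((x^2 - 1 + 2 * x * x) * q^2 - x * (x^2 - 1) * (4 * (x * q))) / q ^ 4 = 8 * x^2 / q ^ 3"
    using q h by (simp add: field_simps) algebra
  thus ?thesis unfolding q_def .
qed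
lemma Fv_deriv: "(Fv has_real_derivative 8*x^2/(x^2+1)^3) (at x)"
  unfolding Fv_def[abs_def]
  apply (rule derivative_eq_intros refl | simp)+
  using alg[of x] by (simp add: add.commute)

lemma Fv_mono: assumes "0 < a" "a < b" shows "Fv a < Fv b"
proof (rule DERIV_pos_imp_increasing[OF assms(2)])
  fix x assume "a \<le> x" "x \<le> b"
  hence x: "x > 0" using assms(1) by linarith
  have "0 < 8*x^2/(x^2+1)^3" using x by (intro divide_pos_pos) (simp_all add: add_pos_nonneg)
  thus "\<exists>y. DERIV Fv x :> y \<and> y > 0" using Fv_deriv[of x] by blast
qed


lemma Fv_ev: assumes "M < pi/2" shows "\<exists>V. \<forall>x\<ge>V. Fv x > M"
proof -
  from order_tendstoD(1)[OF tendsto_arctan_at_top assms] obtain V where V: "\<And>x. x \<ge> V \<Longrightarrow> arctan x > M"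
    by (auto simp: eventually_at_top_linorder)
  have "Fv x > M" if "x \<ge> max V 1" for x
  proof -
    have "x * (x^2 - 1) / (x^2 + 1)^2 \<ge> 0" using that
      by (intro divide_nonneg_nonneg mult_nonneg_nonneg) (auto simp: one_le_power)
    moreover have "arctan x > M" using V[of x] that by auto
    ultimately show ?thesis unfolding Fv_def by linarith
  qed
  thus ?thesis by blast
qed

lemma Fv_isCont: "isCont Fv x"
  unfolding Fv_def[abs_def] by (intro continuous_intros) (auto simp: add_pos_pos)

lemma Fv0: "Fv 0 = 0" by (simp add: Fv_def)

lemma Fv_ex1: assumes "0 < y" "y < pi/2" shows "\<exists>!v. 0 < v \<and> Fv v = y"
proof -
  from Fv_ev[OF assms(2)] obtain V where V: "\<And>x. x \<ge> V \<Longrightarrow> Fv x > y" by blast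
  let ?W = "max V 1"
  have "Fv 0 \<le> y" "y \<le> Fv ?W" using assms V[of ?W] by (auto simp: Fv0)
  then have "\<exists>x\<ge>0. x \<le> ?W \<and> Fv x = y"
    using IVT[of Fv 0 y ?W] Fv_isCont by auto
  then obtain x where x: "0 \<le> x" "x \<le> ?W" "Fv x = y" by blast
  then have "x \<noteq> 0" using assms by (auto simp: Fv0)
  with x have ex: "0 < x \<and> Fv x = y" by auto
  show ?thesis
  proof (rule ex1I[of "\<lambda>v. 0 < v \<and> Fv v = y" x, OF ex])
    fix z assume z: "0 < z \<and> Fv z = y"
    show "z = x"
    proof (rule ccontr)
      assume "z \<noteq> x"
      then consider "z < x" | "x < z" by linarith
      then show False using Fv_mono[of z x] Fv_mono[of x z] z ex by cases auto
    qed
  qed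
qed



theorem lemma3p4:
  fixes \<nu> v0 w0 :: real
  assumes "\<nu> > 0" and "v0 > 0" and "v0 \<noteq> 1"
    and "typeB_blowup \<nu> v0 w0"
  shows "(0 < v0 \<and> v0 < 1 \<and> w0 < - (\<nu> / 2) * f_inf v0) \<or>
         (v0 > 1 \<and> w0 > - (\<nu> / 2) * f_inf v0)"
proof -
  from assms(4) obtain tc where tc: "tc > 0"
    and inG: "\<And>t. t \<in> {0..<tc} \<Longrightarrow> Gt \<nu> v0 w0 t \<in> {0<..<pi/2}"
    and lim: "filterlim (vc \<nu> v0 w0) at_top (at_left tc)"
    unfolding typeB_blowup_def by blast
  define c where "c = 2 * w0 * v0 / (\<nu> * (v0^2 - 1) * (v0^2 + 1)^2)"
  have G: "\<And>t. Gt \<nu> v0 w0 t = Fv v0 + c * (1 - exp (- \<nu> * t))"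
    unfolding Gt_def c_def by (simp add: field_simps)
  have G0: "Fv v0 < pi/2" using inG[of 0] tc G[of 0] by simp
  have key: "Fv v0 + c > pi/2"
  proof (rule ccontr)
    assume "\<not> ?thesis"
    hence le: "Fv v0 + c \<le> pi/2" by simp
    have e: "0 < exp (- \<nu> * tc)" "exp (- \<nu> * tc) < 1" using assms(1) tc by auto
    have Gtc: "Gt \<nu> v0 w0 tc < pi/2"
    proof (cases "c \<le> 0")
      case True
      hence "c * (1 - exp (- \<nu> * tc)) \<le> 0" using e by (simp add: mult_nonpos_nonneg)
      thus ?thesis using G0 G[of tc] by simp
    next
      case False
      hence "c * (1 - exp (- \<nu> * tc)) < c" using e by simp
      thus ?thesis using le G[of tc] by simp
    qed
    define M where "M = (Gt \<nu> v0 w0 tc + pi/2) / 2"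
    have "M < pi/2" "Gt \<nu> v0 w0 tc < M" using Gtc by (auto simp: M_def)
    have contG: "isCont (Gt \<nu> v0 w0) tc" unfolding G[abs_def] by (intro continuous_intros)
    hence "((Gt \<nu> v0 w0) \<longlongrightarrow> Gt \<nu> v0 w0 tc) (at_left tc)"
      by (simp add: isCont_def filterlim_at_split)
    hence ev1: "eventually (\<lambda>t. Gt \<nu> v0 w0 t < M) (at_left tc)"
      using \<open>Gt \<nu> v0 w0 tc < M\<close> by (rule order_tendstoD)
    from Fv_ev[OF \<open>M < pi/2\<close>] obtain V where V: "\<And>x. x \<ge> V \<Longrightarrow> Fv x > M" by blast
    have ev2: "eventually (\<lambda>t. vc \<nu> v0 w0 t > max V 1) (at_left tc)"
    proof -
      from lim have "\<forall>Z. eventually (\<lambda>t. Z < vc \<nu> v0 w0 t) (at_left tc)"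
        by (simp add: filterlim_at_top_dense)
      thus ?thesis by blast
    qed
    have ev3: "eventually (\<lambda>t. 0 < t \<and> t < tc) (at_left tc)"
      using eventually_at_left_real[of 0 tc] tc by simp
    have "eventually (\<lambda>t. False) (at_left tc)"
    proof (rule eventually_mono[OF eventually_conj[OF ev1 eventually_conj[OF ev2 ev3]]])
      fix t assume h: "Gt \<nu> v0 w0 t < M \<and> max V 1 < vc \<nu> v0 w0 t \<and> 0 < t \<and> t < tc"
      hence "Gt \<nu> v0 w0 t \<in> {0<..<pi/2}" using inG[of t] by auto
      hence "\<exists>!v. 0 < v \<and> Fv v = Gt \<nu> v0 w0 t" by (intro Fv_ex1) auto
      hence "0 < vc \<nu> v0 w0 t \<and> Fv (vc \<nu> v0 w0 t) = Gt \<nu> v0 w0 t"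
        unfolding vc_def by (rule theI')
      moreover have "Fv (vc \<nu> v0 w0 t) > M" using V h by auto
      ultimately show False using h by auto
    qed
    thus False by (simp add: trivial_limit_at_left_real)
  qed
  have fi: "- (\<nu> / 2) * f_inf v0 = \<nu> * (v0^2 - 1) * (v0^2 + 1)^2 * (pi/2 - Fv v0) / (2 * v0)"
    using fi assms(2) by blast
  have pos: "(v0^2 + 1)^2 > 0" by (simp add: add_pos_pos)
  consider "v0 < 1" | "v0 > 1" using assms(3) by linarith
  thus ?thesis
  proof cases
    case 1
    hence D: "\<nu> * (v0^2 - 1) * (v0^2 + 1)^2 < 0"
      using assms(1,2) pos by (simp add: mult_pos_neg power_less_one_iff mult_less_0_iff)
    from key have "c > pi/2 - Fv v0" by simp
    hence "2 * w0 * v0 < \<nu> * (v0^2 - 1) * (v0^2 + 1)^2 * (pi/2 - Fv v0)"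
      unfolding c_def using D by (simp add: pos_less_divide_eq neg_less_divide_eq mult.commute)
    hence "w0 < - (\<nu> / 2) * f_inf v0" unfolding fi using assms(2) by (simp add: field_simps)
    thus ?thesis using 1 assms(2) by simp
  next
    case 2
    hence D: "\<nu> * (v0^2 - 1) * (v0^2 + 1)^2 > 0"
      using assms(1,2) pos by (simp add: power_less_one_iff)
    from key have "c > pi/2 - Fv v0" by simp
    hence "2 * w0 * v0 > \<nu> * (v0^2 - 1) * (v0^2 + 1)^2 * (pi/2 - Fv v0)"
      unfolding c_def using D by (simp add: pos_less_divide_eq mult.commute)
    hence "w0 > - (\<nu> / 2) * f_inf v0" unfolding fi using assms(2) by (simp add: field_simps)
    thus ?thesis using 2 by simp
  qed
qed

end
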